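(* Let $\mathfrak{A}$ be a finite-dimensional alternative $\mathbb{Q}$-algebra with radical $\mathfrak{R}$, so that $\mathfrak{A}\cong\mathfrak{S}\oplus\mathfrak{R}$ with $\mathfrak{S}$ a semisimple subalgebra. If $\mathfrak{A}$ has the hyperbolic property, then $\mathfrak{R}$ is $2$-nilpotent (i.e. $\mathfrak{R}^2=0$), and there exists $j_0\in\mathfrak{R}$ with $j_0^2=0$ such that $\mathfrak{R}=\mathbb{Q}j_0$ is the $\mathbb{Q}$-linear span of $j_0$.
   Context: An algebra is alternative if $(xx)y=x(xy)$ and $(yx)x=y(xx)$ for all $x,y$. A $\mathbb{Z}$-order of a finite-dimensional $\mathbb{Q}$-algebra $\mathfrak{A}$ is a unital subring $\Gamma$ that is finitely generated as a $\mathbb{Z}$-module and spans $\mathfrak{A}$ over $\mathbb{Q}$; its units (elements with a two-sided inverse in $\Gamma$) form a loop $\mathcal{U}(\Gamma)$ under multiplication. A loop has the hyperbolic property if it contains no subgroup isomorphic to the free abelian group $\mathbb{Z}^2$ of rank two. The algebra $\mathfrak{A}$ has the hyperbolic property if there exists a $\mathbb{Z}$-order $\Gamma\subset\mathfrak{A}$ whose unit loop $\mathcal{U}(\Gamma)$ has the hyperbolic property. *)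

theory Defs
  imports Complex_Main
begin

definition fd_Q_algebra ::
  "(rat \<Rightarrow> 'a \<Rightarrow> 'a) \<Rightarrow> ('a::ab_group_add \<Rightarrow> 'a \<Rightarrow> 'a) \<Rightarrow> 'a \<Rightarrow> bool" where
  "fd_Q_algebra sc m e \<longleftrightarrow>
     vector_space sc \<and>
     (\<exists>B. finite B \<and> module.span sc B = UNIV) \<and>
     (\<forall>x y z. m (x + y) z = m x z + m y z \<and> m x (y + z) = m x y + m x z) \<and>
     (\<forall>c x y. m (sc c x) y = sc c (m x y) \<and> m x (sc c y) = sc c (m x y)) \<and>
     (\<forall>x. m e x = x \<and> m x e = x)"

definition alternative :: "('a \<Rightarrow> 'a \<Rightarrow> 'a) \<Rightarrow> bool" where
  "alternative m \<longleftrightarrow> (\<forall>x y. m (m x x) y = m x (m x y) \<and> m (m y x) x = m y (m x x))"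

definition is_ideal ::
  "(rat \<Rightarrow> 'a \<Rightarrow> 'a) \<Rightarrow> ('a::ab_group_add \<Rightarrow> 'a \<Rightarrow> 'a) \<Rightarrow> 'a set \<Rightarrow> bool" where
  "is_ideal sc m I \<longleftrightarrow> module.subspace sc I \<and> (\<forall>x i. i \<in> I \<longrightarrow> m x i \<in> I \<and> m i x \<in> I)"

inductive prod_of :: "('a \<Rightarrow> 'a \<Rightarrow> 'a) \<Rightarrow> 'a set \<Rightarrow> nat \<Rightarrow> 'a \<Rightarrow> bool"
  for m I where
  base: "x \<in> I \<Longrightarrow> prod_of m I 1 x"
| mult: "prod_of m I a x \<Longrightarrow> prod_of m I b y \<Longrightarrow> prod_of m I (a + b) (m x y)"

text \<open>I is nilpotent: I^n = 0 for some n >= 1 (I^n is spanned by all products of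
n elements of I in all bracketings).\<close>
definition nilpotent_set :: "('a::zero \<Rightarrow> 'a \<Rightarrow> 'a) \<Rightarrow> 'a set \<Rightarrow> bool" where
  "nilpotent_set m I \<longleftrightarrow> (\<exists>n\<ge>1. \<forall>x. prod_of m I n x \<longrightarrow> x = 0)"

definition is_radical ::
  "(rat \<Rightarrow> 'a \<Rightarrow> 'a) \<Rightarrow> ('a::ab_group_add \<Rightarrow> 'a \<Rightarrow> 'a) \<Rightarrow> 'a set \<Rightarrow> bool" where
  "is_radical sc m R \<longleftrightarrow> is_ideal sc m R \<and> nilpotent_set m R \<and>
     (\<forall>I. is_ideal sc m I \<and> nilpotent_set m I \<longrightarrow> I \<subseteq> R)"

definition Z_order ::
  "(rat \<Rightarrow> 'a \<Rightarrow> 'a) \<Rightarrow> ('a::ab_group_add \<Rightarrow> 'a \<Rightarrow> 'a) \<Rightarrow> 'a \<Rightarrow> 'a set \<Rightarrow> bool" where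
  "Z_order sc m e G \<longleftrightarrow>
     e \<in> G \<and> (\<forall>x\<in>G. \<forall>y\<in>G. x - y \<in> G \<and> m x y \<in> G) \<and>
     (\<exists>F. finite F \<and> G = {\<Sum>g\<in>F. sc (of_int (c g)) g | c. True}) \<and>
     module.span sc G = UNIV"

definition unit_loop :: "('a \<Rightarrow> 'a \<Rightarrow> 'a) \<Rightarrow> 'a \<Rightarrow> 'a set \<Rightarrow> 'a set" where
  "unit_loop m e G = {u \<in> G. \<exists>v\<in>G. m u v = e \<and> m v u = e}"

definition contains_Z2 :: "('a \<Rightarrow> 'a \<Rightarrow> 'a) \<Rightarrow> 'a set \<Rightarrow> bool" where
  "contains_Z2 m U \<longleftrightarrow> (\<exists>\<phi> :: int \<times> int \<Rightarrow> 'a. inj \<phi> \<and> range \<phi> \<subseteq> U \<and>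
     (\<forall>a b c d. \<phi> (a + c, b + d) = m (\<phi> (a, b)) (\<phi> (c, d))))"

definition hyperbolic_loop :: "('a \<Rightarrow> 'a \<Rightarrow> 'a) \<Rightarrow> 'a set \<Rightarrow> bool" where
  "hyperbolic_loop m U \<longleftrightarrow> \<not> contains_Z2 m U"

definition hyperbolic_algebra ::
  "(rat \<Rightarrow> 'a \<Rightarrow> 'a) \<Rightarrow> ('a::ab_group_add \<Rightarrow> 'a \<Rightarrow> 'a) \<Rightarrow> 'a \<Rightarrow> bool" where
  "hyperbolic_algebra sc m e \<longleftrightarrow>
     (\<exists>G. Z_order sc m e G \<and> hyperbolic_loop m (unit_loop m e G))"

end

theory Submission imports Defs begin

locale alg =
  fixes sc :: "rat \<Rightarrow> 'a::ab_group_add \<Rightarrow> 'a" and m e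
  assumes fd: "fd_Q_algebra sc m e"
begin

sublocale vector_space sc using fd unfolding fd_Q_algebra_def by auto

lemma madd1[simp]: "m (x + y) z = m x z + m y z" and madd2[simp]: "m x (y + z) = m x y + m x z"
  and msc1[simp]: "m (sc c x) y = sc c (m x y)" and msc2[simp]: "m x (sc c y) = sc c (m x y)"
  and me1[simp]: "m e x = x" and me2[simp]: "m x e = x"
  using fd unfolding fd_Q_algebra_def by auto

lemma mz1[simp]: "m 0 y = 0" using madd1[of 0 0 y] by simp
lemma mz2[simp]: "m y 0 = 0" using madd2[of y 0 0] by simp

lemma scale_int_mem:
  assumes G: "\<forall>x\<in>G. \<forall>y\<in>G. x - y \<in> G" and "e \<in> G" and g: "g \<in> G"
  shows "sc (of_int k) g \<in> G"
proof -
  have z: "0 \<in> G" using G \<open>e\<in>G\<close> by force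
  have neg: "- x \<in> G" if "x \<in> G" for x using G z that by force
  have add: "x + y \<in> G" if "x \<in> G" "y \<in> G" for x y
    using G[rule_format, OF that(1) neg[OF that(2)]] by simp
  show ?thesis
  proof (induction k rule: int_induct[where k=0])
    case base then show ?case using z by simp
  next
    case (step1 i)
    have "sc (of_int (i+1)) g = sc (of_int i) g + g" by (simp add: scale_left_distrib)
    then show ?case using add step1 g by simp
  next
    case (step2 i)
    have "sc (of_int (i-1)) g = sc (of_int i) g - g" by (simp add: scale_left_diff_distrib)
    then show ?case using G step2 g by simp
  qed
qed


lemma into_G:
  assumes Z: "Z_order sc m e G"
  shows "\<exists>N::nat. N > 0 \<and> sc (of_nat N) v \<in> G"
proof -
  have G: "\<forall>x\<in>G. \<forall>y\<in>G. x - y \<in> G" and eG: "e \<in> G" and sp: "span G = UNIV"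
    using Z unfolding Z_order_def by auto
  have v: "v \<in> span G" using sp by simp
  then show ?thesis
  proof (induction rule: span_induct_alt)
    case base
    have "sc (of_int 0) e \<in> G" by (rule scale_int_mem[OF G eG eG])
    then show ?case by (intro exI[of _ 1]) simp
  next
    case (step c x y)
    then obtain N where N: "N > 0" "sc (of_nat N) y \<in> G" by auto
    obtain p q where pq: "quotient_of c = (p, q)" by (cases "quotient_of c")
    have q0: "q > 0" using quotient_of_denom_pos[OF pq] .
    have c: "c = of_int p / of_int q" using quotient_of_div[OF pq] .
    define M where "M = nat q * N"
    have M0: "M > 0" using q0 N by (simp add: M_def)
    have "of_nat M * c = of_int (p * int N)" using q0 unfolding M_def c by simp
    then have "sc (of_nat M) (sc c x + y) = sc (of_int (p * int N)) x + sc (of_int q) (sc (of_nat N) y)"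
      using q0 by (simp add: scale_right_distrib M_def mult.commute)
    moreover have "sc (of_int (p * int N)) x \<in> G" by (rule scale_int_mem[OF G eG step(1)])
    moreover have "sc (of_int q) (sc (of_nat N) y) \<in> G" by (rule scale_int_mem[OF G eG N(2)])
    moreover have "a + b \<in> G" if "a \<in> G" "b \<in> G" for a b
    proof -
      have "0 \<in> G" using G eG by force
      then have "- b \<in> G" using G that by force
      then show ?thesis using G that by force
    qed
    ultimately show ?case using M0 by auto
  qed
qed


lemma z2:
  assumes Z: "Z_order sc m e G" and XG: "X \<in> G" and YG: "Y \<in> G"
    and XY: "m X Y = 0" and YX: "m Y X = 0" and YY: "m Y Y = 0"
    and XX: "m X X = sc (of_int (2*t)) Y" and Y0: "Y \<noteq> 0" and ind: "\<forall>c. X \<noteq> sc c Y"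
  shows "contains_Z2 m (unit_loop m e G)"
proof -
  have G: "\<forall>x\<in>G. \<forall>y\<in>G. x - y \<in> G" and eG: "e \<in> G" and mG: "\<forall>x\<in>G. \<forall>y\<in>G. m x y \<in> G"
    using Z unfolding Z_order_def by auto
  have addG: "a + b \<in> G" if "a \<in> G" "b \<in> G" for a b
  proof -
    have "0 \<in> G" using G eG by force
    then have "- b \<in> G" using G that by force
    then show ?thesis using G that by force
  qed
  define \<phi> where "\<phi> = (\<lambda>(a::int, b::int). e + sc (of_int a) X + sc (of_int (b + t*a^2)) Y)"
  have phiG: "\<phi> p \<in> G" for p
  proof (cases p)
    case (Pair a b)
    have "sc (of_int a) X \<in> G" "sc (of_int (b + t*a^2)) Y \<in> G"
      by (rule scale_int_mem[OF G eG XG], rule scale_int_mem[OF G eG YG])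
    then show ?thesis unfolding \<phi>_def Pair using addG eG by simp
  qed
  have hom: "\<phi> (a + c, b + d) = m (\<phi> (a, b)) (\<phi> (c, d))" for a b c d
  proof -
    have "m (\<phi> (a, b)) (\<phi> (c, d)) = e + sc (of_int c) X + sc (of_int (d + t*c^2)) Y
       + sc (of_int a) X + sc (of_int (b + t*a^2)) Y + sc (of_int a * of_int c * of_int (2*t)) Y"
      unfolding \<phi>_def by (simp add: XY YX YY XX algebra_simps)
    also have "\<dots> = e + (sc (of_int c) X + sc (of_int a) X) + (sc (of_int (d + t*c^2)) Y
        + sc (of_int (b + t*a^2)) Y + sc (of_int a * of_int c * of_int (2*t)) Y)"
      by (simp add: algebra_simps)
    also have "\<dots> = e + sc (of_int c + of_int a) X + sc (of_int (d + t*c^2) + of_int (b + t*a^2) +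
        of_int a * of_int c * of_int (2*t)) Y"
      by (simp only: scale_left_distrib)
    also have "\<dots> = \<phi> (a + c, b + d)"
      unfolding \<phi>_def by (simp add: algebra_simps power2_eq_square)
    finally show ?thesis by simp
  qed
  have phi0: "\<phi> (0, 0) = e" unfolding \<phi>_def by simp
  have inj: "inj \<phi>"
  proof (rule injI)
    fix p q assume eq: "\<phi> p = \<phi> q"
    obtain a b where p: "p = (a, b)" by (cases p)
    obtain c d where q: "q = (c, d)" by (cases q)
    have "sc (of_int a) X + sc (of_int (b + t*a^2)) Y = sc (of_int c) X + sc (of_int (d + t*c^2)) Y"
      using eq unfolding p q \<phi>_def by simp
    then have e1: "sc (of_int a - of_int c) X = sc (of_int (d + t*c^2) - of_int (b + t*a^2)) Y"
      by (simp add: scale_left_diff_distrib algebra_simps)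
    have ac: "a = c"
    proof (rule ccontr)
      assume "a \<noteq> c"
      then have ne: "(of_int a - of_int c :: rat) \<noteq> 0" by simp
      have "X = sc (inverse (of_int a - of_int c)) (sc (of_int a - of_int c) X)"
        using ne by simp
      also have "\<dots> = sc (inverse (of_int a - of_int c) * (of_int (d + t*c^2) - of_int (b + t*a^2))) Y"
        by (simp only: e1 scale_scale)
      finally show False using ind by blast
    qed
    then have "sc (of_int (d + t*c^2) - of_int (b + t*a^2)) Y = 0" using e1 by simp
    then have "b = d" using Y0 ac by simp
    then show "p = q" using ac p q by simp
  qed
  have "range \<phi> \<subseteq> unit_loop m e G"
  proof
    fix u assume "u \<in> range \<phi>"
    then obtain a b where u: "u = \<phi> (a, b)" by auto
    have "m u (\<phi> (-a, -b)) = e" "m (\<phi> (-a, -b)) u = e"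
      using hom[of a "-a" b "-b"] hom[of "-a" a "-b" b] phi0 u by simp_all
    then show "u \<in> unit_loop m e G" unfolding unit_loop_def using phiG u by blast
  qed
  then show ?thesis unfolding contains_Z2_def using inj hom by blast
qed


end

lemma prod_in: "prod_of m R k x \<Longrightarrow> is_ideal sc m R \<Longrightarrow> x \<in> R"
  by (induction rule: prod_of.induct) (auto simp: is_ideal_def)

lemma prod_pos: "prod_of m R k x \<Longrightarrow> k \<ge> 1"
  by (induction rule: prod_of.induct) auto

lemma collapse1: "prod_of m R k x \<Longrightarrow> is_ideal sc m R \<Longrightarrow> k \<ge> 2 \<Longrightarrow> prod_of m R (k-1) x"
proof (induction rule: prod_of.induct)
  case (base x) then show ?case by linarith
next
  case (mult a x b y)
  note px = mult.hyps(1) and py = mult.hyps(2) and IHx = mult.IH(1) and IHy = mult.IH(2)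
  note I = mult.prems(1)
  have a1: "a \<ge> 1" using prod_pos[OF px] .
  have b1: "b \<ge> 1" using prod_pos[OF py] .
  show ?case
  proof (cases "a \<ge> 2")
    case True
    have "prod_of m R (a - 1) x" using IHx[OF I True] .
    then have "prod_of m R (a - 1 + b) (m x y)" using py by (rule prod_of.mult)
    moreover have "a - 1 + b = a + b - 1" using True by arith
    ultimately show ?thesis by metis
  next
    case False
    show ?thesis
    proof (cases "b \<ge> 2")
      case True
      have "prod_of m R (b - 1) y" using IHy[OF I True] .
      with px have "prod_of m R (a + (b - 1)) (m x y)" by (rule prod_of.mult)
      moreover have "a + (b - 1) = a + b - 1" using True by arith
      ultimately show ?thesis by metis
    next
      case False
      have ab: "a + b - 1 = 1" using a1 b1 False \<open>\<not> a \<ge> 2\<close> by arith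
      have "x \<in> R" using prod_in[OF px I] .
      moreover have "y \<in> R" using prod_in[OF py I] .
      ultimately have "m x y \<in> R" using I unfolding is_ideal_def by blast
      then show ?thesis unfolding ab by (rule prod_of.base)
    qed
  qed
qed

lemma collapse: "prod_of m R k x \<Longrightarrow> is_ideal sc m R \<Longrightarrow> 1 \<le> j \<Longrightarrow> j \<le> k \<Longrightarrow> prod_of m R j x"
proof (induction "k - j" arbitrary: k)
  case 0 then show ?case by simp
next
  case (Suc d)
  have k2: "k \<ge> 2" using Suc(2) Suc(5) by arith
  have "prod_of m R (k-1) x" using collapse1[OF Suc(3,4) k2] .
  moreover have "d = (k - 1) - j" using Suc(2) by arith
  moreover have "j \<le> k - 1" using Suc(2) by arith
  ultimately show ?case using Suc(1)[of "k-1"] Suc(4,5) by blast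
qed


theorem proposition2p2:
  fixes sc :: "rat \<Rightarrow> 'a::ab_group_add \<Rightarrow> 'a"
    and m :: "'a \<Rightarrow> 'a \<Rightarrow> 'a" and e :: 'a and R :: "'a set"
  assumes "fd_Q_algebra sc m e"
    and "alternative m"
    and "is_radical sc m R"
    and "hyperbolic_algebra sc m e"
  shows "(\<forall>x\<in>R. \<forall>y\<in>R. m x y = 0) \<and>
         (\<exists>j0\<in>R. m j0 j0 = 0 \<and> R = {sc c j0 | c. True})"
proof -
  interpret alg sc m e by standard (rule assms(1))
  have I: "is_ideal sc m R" and nil: "nilpotent_set m R" using assms(3) unfolding is_radical_def by auto
  have sub: "subspace R" and Icl: "\<And>x i. i \<in> R \<Longrightarrow> m x i \<in> R \<and> m i x \<in> R"
    using I unfolding is_ideal_def by auto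
  have R0: "0 \<in> R" using sub subspace_0 by blast
  obtain n where n1: "n \<ge> 1" and nz: "\<And>x. prod_of m R n x \<Longrightarrow> x = 0"
    using nil unfolding nilpotent_set_def by blast
  have big: "x = 0" if "prod_of m R k x" "k \<ge> n" for k x
    using nz[OF collapse[OF that(1) I n1 that(2)]] .
  have C: "\<exists>j0\<in>R. \<forall>r\<in>R. \<exists>c. r = sc c j0"
  proof (rule ccontr)
    assume H: "\<not> ?thesis"
    define P where "P k \<longleftrightarrow> (\<exists>x. prod_of m R k x \<and> x \<noteq> 0)" for k
    have "\<not> (\<forall>r\<in>R. \<exists>c. r = sc c 0)" using H R0 by blast
    then obtain r0 where r0: "r0 \<in> R" "r0 \<noteq> 0" by auto
    have P1: "P 1" unfolding P_def using r0(2) prod_of.base[of r0 R m, OF r0(1)] by blast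
    have Pb: "\<forall>k. P k \<longrightarrow> k \<le> n"
    proof (intro allI impI)
      fix k assume "P k"
      then obtain x where "prod_of m R k x" "x \<noteq> 0" unfolding P_def by blast
      then show "k \<le> n" using big[of k x] by linarith
    qed
    define K where "K = (GREATEST k. P k)"
    have PK: "P K" unfolding K_def by (rule GreatestI_nat[where P=P, OF P1 Pb[rule_format]])
    have PKb: "k \<le> K" if "P k" for k unfolding K_def by (rule Greatest_le_nat[where P=P, OF that Pb[rule_format]])
    obtain l where pl: "prod_of m R K l" and l0: "l \<noteq> 0" using PK unfolding P_def by blast
    have lR: "l \<in> R" using prod_in[OF pl I] .
    have ann1: "m l z = 0" if "z \<in> R" for z
    proof (rule ccontr)
      assume "m l z \<noteq> 0"
      moreover have "prod_of m R (K + 1) (m l z)" using prod_of.mult[OF pl prod_of.base[OF that]] .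
      ultimately have "P (K+1)" unfolding P_def by blast
      then show False using PKb by fastforce
    qed
    have ann2: "m z l = 0" if "z \<in> R" for z
    proof (rule ccontr)
      assume "m z l \<noteq> 0"
      moreover have "prod_of m R (1 + K) (m z l)" using prod_of.mult[OF prod_of.base[OF that] pl] .
      ultimately have "P (K+1)" unfolding P_def by simp blast
      then show False using PKb by fastforce
    qed
    define Q where "Q k \<longleftrightarrow> (\<exists>x. prod_of m R k x \<and> (\<forall>c. x \<noteq> sc c l))" for k
    have "\<not> (\<forall>r\<in>R. \<exists>c. r = sc c l)" using H lR by blast
    then obtain r1 where r1: "r1 \<in> R" "\<forall>c. r1 \<noteq> sc c l" by blast
    have Q1: "Q 1" unfolding Q_def using r1(2) prod_of.base[of r1 R m, OF r1(1)] by blast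
    have Qb: "\<forall>k. Q k \<longrightarrow> k \<le> n" unfolding Q_def
    proof (intro allI impI)
      fix k assume "\<exists>x. prod_of m R k x \<and> (\<forall>c. x \<noteq> sc c l)"
      then obtain x where "prod_of m R k x" "\<forall>c. x \<noteq> sc c l" by blast
      moreover have "x \<noteq> 0" using \<open>\<forall>c. x \<noteq> sc c l\<close> scale_zero_left by metis
      ultimately show "k \<le> n" using big[of k x] by linarith
    qed
    define k' where "k' = (GREATEST k. Q k)"
    have Qk: "Q k'" unfolding k'_def by (rule GreatestI_nat[where P=Q, OF Q1 Qb[rule_format]])
    have Qkb: "k \<le> k'" if "Q k" for k unfolding k'_def by (rule Greatest_le_nat[where P=Q, OF that Qb[rule_format]])
    obtain x where px: "prod_of m R k' x" and xind: "\<forall>c. x \<noteq> sc c l" using Qk unfolding Q_def by blast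
    have xR: "x \<in> R" using prod_in[OF px I] .
    have k1: "k' \<ge> 1" using prod_pos[OF px] .
    have "prod_of m R (k' + k') (m x x)" using prod_of.mult[OF px px] .
    then have "prod_of m R (k' + 1) (m x x)" using collapse[OF _ I, of "k' + k'" "m x x" "k' + 1"] k1 by linarith
    moreover have "\<not> Q (k' + 1)" using Qkb by fastforce
    ultimately obtain s where xx: "m x x = sc s l" unfolding Q_def by blast
    obtain G where Z: "Z_order sc m e G" and hyp: "hyperbolic_loop m (unit_loop m e G)"
      using assms(4) unfolding hyperbolic_algebra_def by blast
    have G: "\<forall>x\<in>G. \<forall>y\<in>G. x - y \<in> G" and eG: "e \<in> G" and mG: "\<forall>x\<in>G. \<forall>y\<in>G. m x y \<in> G"
      using Z unfolding Z_order_def by auto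
    obtain N :: nat where N: "N > 0" "sc (of_nat N) x \<in> G" using into_G[OF Z] by blast
    obtain M :: nat where M: "M > 0" "sc (of_nat M) l \<in> G" using into_G[OF Z] by blast
    define X0 where "X0 = sc (of_nat N) x"
    have xl: "m x l = 0" using ann2[OF xR] .
    have lx: "m l x = 0" using ann1[OF xR] .
    have ll: "m l l = 0" using ann1[OF lR] .
    have indq: "\<forall>c. X \<noteq> sc c Y" if "X = sc a x" "Y = sc q l" "a \<noteq> 0" "q \<noteq> 0" for X Y a q
    proof (intro allI notI)
      fix c assume "X = sc c Y"
      then have "sc a x = sc (c * q) l" using that by simp
      then have "sc (inverse a) (sc a x) = sc (inverse a * (c * q)) l" by simp
      then have "x = sc (inverse a * (c * q)) l" using that(3) by simp
      then show False using xind by blast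
    qed
    have "contains_Z2 m (unit_loop m e G)"
    proof (cases "m X0 X0 = 0")
      case True
      define Y where "Y = sc (of_nat M) l"
      show ?thesis
      proof (rule z2[OF Z, of X0 Y 0])
        show "X0 \<in> G" "Y \<in> G" using N M X0_def Y_def by auto
        show "m X0 Y = 0" "m Y X0 = 0" "m Y Y = 0" unfolding X0_def Y_def using xl lx ll by simp_all
        show "m X0 X0 = sc (of_int (2 * 0)) Y" using True by simp
        show "Y \<noteq> 0" using M l0 Y_def by simp
        show "\<forall>c. X0 \<noteq> sc c Y" by (rule indq[OF X0_def Y_def]) (use N M in auto)
      qed
    next
      case False
      define Y where "Y = m X0 X0"
      define X where "X = sc (of_int 2) X0"
      have Yl: "Y = sc (of_nat N * of_nat N * s) l" unfolding Y_def X0_def by (simp add: xx)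
      have s0: "of_nat N * of_nat N * s \<noteq> 0" using False Yl Y_def by auto
      show ?thesis
      proof (rule z2[OF Z, of X Y 2])
        show "X \<in> G" unfolding X_def by (rule scale_int_mem[OF G eG]) (use N X0_def in simp)
        show "Y \<in> G" unfolding Y_def using mG N(2) X0_def by blast
        show "m X Y = 0" "m Y X = 0" "m Y Y = 0" unfolding X_def X0_def Yl using xl lx ll by simp_all
        show "m X X = sc (of_int (2 * 2)) Y" unfolding X_def Y_def by simp
        show "Y \<noteq> 0" using False Y_def by simp
        show "\<forall>c. X \<noteq> sc c Y" by (rule indq[OF _ Yl, of _ "2 * of_nat N"]) (use N s0 X_def X0_def in auto)
      qed
    qed
    then show False using hyp unfolding hyperbolic_loop_def by blast
  qed
  then obtain j0 where j0R: "j0 \<in> R" and j0: "\<And>r. r \<in> R \<Longrightarrow> \<exists>c. r = sc c j0" by blast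
  have Req: "R = {sc c j0 | c. True}"
  proof
    show "R \<subseteq> {sc c j0 | c. True}" using j0 by blast
    show "{sc c j0 | c. True} \<subseteq> R" using j0R sub subspace_scale by blast
  qed
  obtain c where cj: "m j0 j0 = sc c j0" using j0 Icl[OF j0R] by blast
  have jj: "m j0 j0 = 0"
  proof (cases "c = 0")
    case True then show ?thesis using cj by simp
  next
    case False
    define f where "f = sc (inverse c) j0"
    have fR: "f \<in> R" using j0R sub subspace_scale f_def by blast
    have ff: "m f f = f" unfolding f_def using cj False by simp
    have "prod_of m R (Suc k) f" for k
    proof (induction k)
      case 0 then show ?case using prod_of.base[OF fR] by simp
    next
      case (Suc k)
      have "prod_of m R (Suc k + 1) (m f f)" using prod_of.mult[OF Suc prod_of.base[OF fR]] .
      then show ?case using ff by simp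
    qed
    then have "prod_of m R (Suc (n - 1)) f" .
    then have "prod_of m R n f" using n1 by simp
    then have "f = 0" using nz by blast
    then have "j0 = 0" using False f_def by simp
    then show ?thesis by simp
  qed
  have "\<forall>x\<in>R. \<forall>y\<in>R. m x y = 0"
  proof (intro ballI)
    fix x y assume "x \<in> R" "y \<in> R"
    then obtain a b where "x = sc a j0" "y = sc b j0" using j0 by blast
    then show "m x y = 0" using jj by simp
  qed
  then show ?thesis using j0R jj Req by blast
qed

end
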